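(* Let $n\ge 3$ be an integer and let $c>0$ be a real constant satisfying \[ 2c + \frac{2}{3}c^2 - \frac{2c}{3(n-2)} > 1 . \] Put $d = \lceil \sqrt{c(n-2)}\,\rceil$. Then there exists a real polynomial on $\mathbb{R}^n$ of degree $d$ if $d$ is even, and of degree $d+1$ if $d$ is odd, which is a $\tfrac13$-approximation of $NAE_n$.
   Context: $NAE_n:\{0,1\}^n\to\{0,1\}$ is the function that equals $1$ iff $x\in\{0^n,1^n\}$, i.e. all bits of the input are the same. A real polynomial $q$ on $\mathbb{R}^n$ is a $\tfrac13$-approximation of $g:\{0,1\}^n\to\{0,1\}$ if $|g(x)-q(x)|\le \tfrac13$ for every $x\in\{0,1\}^n$. *)

theory Defs
  imports Complex_Main
begin

text \<open>Real polynomials in the n variables x_0,...,x_(n-1), represented by their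
coefficient function on exponent vectors (monomials) alpha :: nat => nat.\<close>

definition mpoly_n :: "nat \<Rightarrow> ((nat \<Rightarrow> nat) \<Rightarrow> real) \<Rightarrow> bool" where
  "mpoly_n n p \<longleftrightarrow> finite {\<alpha>. p \<alpha> \<noteq> 0} \<and> (\<forall>\<alpha>. p \<alpha> \<noteq> 0 \<longrightarrow> (\<forall>i\<ge>n. \<alpha> i = 0))"

definition mdeg :: "nat \<Rightarrow> ((nat \<Rightarrow> nat) \<Rightarrow> real) \<Rightarrow> nat" where
  "mdeg n p = Max (insert 0 ((\<lambda>\<alpha>. \<Sum>i<n. \<alpha> i) ` {\<alpha>. p \<alpha> \<noteq> 0}))"

definition meval :: "nat \<Rightarrow> ((nat \<Rightarrow> nat) \<Rightarrow> real) \<Rightarrow> (nat \<Rightarrow> real) \<Rightarrow> real" where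
  "meval n p x = (\<Sum>\<alpha>\<in>{\<alpha>. p \<alpha> \<noteq> 0}. p \<alpha> * (\<Prod>i<n. x i ^ \<alpha> i))"

definition bool_pt :: "nat \<Rightarrow> (nat \<Rightarrow> real) \<Rightarrow> bool" where
  "bool_pt n x \<longleftrightarrow> (\<forall>i<n. x i = 0 \<or> x i = 1)"

definition NAE :: "nat \<Rightarrow> (nat \<Rightarrow> real) \<Rightarrow> real" where
  "NAE n x = (if (\<forall>i<n. x i = 0) \<or> (\<forall>i<n. x i = 1) then 1 else 0)"

definition approx13 :: "nat \<Rightarrow> ((nat \<Rightarrow> nat) \<Rightarrow> real) \<Rightarrow> ((nat \<Rightarrow> real) \<Rightarrow> real) \<Rightarrow> bool" where
  "approx13 n p g \<longleftrightarrow> (\<forall>x. bool_pt n x \<longrightarrow> \<bar>g x - meval n p x\<bar> \<le> 1/3)"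

end

theory Submission
  imports Defs
begin

definition Kop :: "(nat \<Rightarrow> real) \<Rightarrow> nat \<Rightarrow> real" where
  "Kop c j = real j * (c j + c (j - 1))"
definition ev :: "(nat \<Rightarrow> real) \<Rightarrow> nat \<Rightarrow> real" where
  "ev c k = (\<Sum>j\<le>k. c j * real (k choose j))"

lemma binom_step: "Suc i * (Suc m choose Suc i) = (Suc m - i) * (Suc m choose i)"
  using Suc_times_binomial[of i m] binomial_absorb_comp[of "Suc m" i] by simp

lemma ev_Kop: "ev (Kop c) k = real k * ev c k"
proof (cases k)
  case 0 then show ?thesis by (simp add: ev_def Kop_def)
next
  case (Suc m)
  have "ev (Kop c) k = (\<Sum>j\<le>k. real j * c j * real (k choose j)) + (\<Sum>j\<le>k. real j * c (j-1) * real (k choose j))"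
    by (simp add: ev_def Kop_def sum.distrib algebra_simps)
  also have "(\<Sum>j\<le>k. real j * c (j-1) * real (k choose j)) = (\<Sum>i\<le>m. real (Suc i) * c i * real (k choose Suc i))"
    unfolding Suc by (subst sum.atMost_Suc_shift) simp
  also have "\<dots> = (\<Sum>i\<le>m. real (k - i) * c i * real (k choose i))"
  proof (rule sum.cong[OF refl])
    fix i
    have "real (Suc i) * real (k choose Suc i) = real (k - i) * real (k choose i)"
      using binom_step[of i m] unfolding Suc of_nat_mult[symmetric] by presburger
    then show "real (Suc i) * c i * real (k choose Suc i) = real (k - i) * c i * real (k choose i)"
      by (metis mult.commute mult.left_commute)
  qed
  also have "\<dots> = (\<Sum>i\<le>k. real (k - i) * c i * real (k choose i))"
    unfolding Suc by simp
  finally have "ev (Kop c) k = (\<Sum>j\<le>k. (real j * c j * real (k choose j)) + real (k - j) * c j * real (k choose j))"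
    by (simp add: sum.distrib)
  also have "\<dots> = (\<Sum>j\<le>k. real k * (c j * real (k choose j)))"
    by (rule sum.cong[OF refl]) (simp add: of_nat_diff algebra_simps)
  finally show ?thesis by (simp add: ev_def sum_distrib_left)
qed

definition Yop :: "nat \<Rightarrow> (nat \<Rightarrow> real) \<Rightarrow> nat \<Rightarrow> real" where
  "Yop n c j = (2 * Kop c j - real n * c j) / (real n - 2)"

fun cheb :: "nat \<Rightarrow> nat \<Rightarrow> nat \<Rightarrow> real" where
  "cheb n 0 = (\<lambda>j. if j = 0 then 1 else 0)"
| "cheb n (Suc 0) = Yop n (cheb n 0)"
| "cheb n (Suc (Suc m)) = (\<lambda>j. 2 * Yop n (cheb n (Suc m)) j - cheb n m j)"

lemma nat2_induct: "P 0 \<Longrightarrow> P (Suc 0) \<Longrightarrow> (\<And>m. P m \<Longrightarrow> P (Suc m) \<Longrightarrow> P (Suc (Suc m))) \<Longrightarrow> P m"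
  by (induction m rule: nat_less_induct) (metis less_Suc_eq not0_implies_Suc)

fun Tf :: "nat \<Rightarrow> real \<Rightarrow> real" where
  "Tf 0 y = 1"
| "Tf (Suc 0) y = y"
| "Tf (Suc (Suc m)) y = 2 * y * Tf (Suc m) y - Tf m y"

lemma ev_Yop: "ev (Yop n c) k = ((2 * real k - real n) / (real n - 2)) * ev c k"
proof -
  have "ev (Yop n c) k = (2 * ev (Kop c) k - real n * ev c k) / (real n - 2)"
    by (simp add: ev_def Yop_def sum_divide_distrib[symmetric] sum_subtractf sum_distrib_left
        algebra_simps diff_divide_distrib)
  then show ?thesis by (simp add: ev_Kop algebra_simps)
qed

lemma ev_lin: "ev (\<lambda>j. 2 * f j - g j) k = 2 * ev f k - ev g k"
  by (simp add: ev_def sum_subtractf sum_distrib_left algebra_simps)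

lemma sum_delta0: "(\<Sum>j\<le>(k::nat). (if j = 0 then 1 else 0) * (f j::real)) = f 0"
  by (induction k rule: nat.induct) auto

lemma ev_cheb: "ev (cheb n m) k = Tf m ((2 * real k - real n) / (real n - 2))"
proof (induction m rule: nat2_induct)
  case 1 then show ?case by (simp add: ev_def sum_delta0)
next
  case 2 then show ?case by (simp add: ev_Yop) (simp add: ev_def sum_delta0)
next
  case (3 m)
  then show ?case by (simp add: ev_lin ev_Yop)
qed

lemma cheb_supp: "m < j \<Longrightarrow> cheb n m j = 0"
proof (induction m arbitrary: j rule: nat2_induct)
  case 1 then show ?case by simp
next
  case 2 then show ?case by (simp add: Yop_def Kop_def)
next
  case (3 m)
  then show ?case by (simp add: Yop_def Kop_def)
qed

lemma Tf_cos: "Tf m (cos t) = cos (real m * t)"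
proof (induction m rule: nat2_induct)
  case 1 then show ?case by simp
next
  case 2 then show ?case by simp
next
  case (3 m)
  have "cos ((real m + 1) * t + t) + cos ((real m + 1) * t - t) = 2 * cos t * cos ((real m + 1) * t)"
    by (simp add: cos_add cos_diff)
  moreover have "(real m + 1) * t + t = real (Suc (Suc m)) * t" "(real m + 1) * t - t = real m * t"
    by (simp_all add: algebra_simps)
  ultimately show ?case using 3 by (simp add: algebra_simps)
qed

lemma Tf_bound: "\<bar>y\<bar> \<le> 1 \<Longrightarrow> \<bar>Tf m y\<bar> \<le> 1"
  using Tf_cos[of m "arccos y"] by (simp add: cos_arccos)

lemma Tf_neg: "Tf m (- y) = (-1) ^ m * Tf m y"
  by (induction m rule: nat2_induct) (simp_all add: algebra_simps)

definition Pb :: "real \<Rightarrow> nat \<Rightarrow> real" where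
  "Pb \<delta> m = 1 + (real m)^2 * \<delta> + (real m)^2 * ((real m)^2 - 1) * \<delta>^2 / 6"

lemma Pb_step: assumes "\<delta> \<ge> 0"
  shows "Pb \<delta> (Suc (Suc m)) - Pb \<delta> (Suc m) \<le> (Pb \<delta> (Suc m) - Pb \<delta> m) + 2 * \<delta> * Pb \<delta> (Suc m)"
proof -
  define r where "r = real m"
  have r0: "r \<ge> 0" by (simp add: r_def)
  have eq: "(Pb \<delta> (Suc m) - Pb \<delta> m) + 2 * \<delta> * Pb \<delta> (Suc m) - (Pb \<delta> (Suc (Suc m)) - Pb \<delta> (Suc m))
      = (r+1)^2 * (r * (r+2)) * \<delta>^3 / 3"
    unfolding Pb_def r_def by (simp add: field_simps power2_eq_square power3_eq_cube)
  have "(r+1)^2 * (r * (r+2)) * \<delta>^3 / 3 \<ge> 0" using r0 assms by simp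
  then show ?thesis using eq by linarith
qed

lemma Tf_lower_aux: assumes "\<delta> \<ge> 0"
  shows "Tf (Suc m) (1+\<delta>) \<ge> Pb \<delta> (Suc m) \<and> Tf (Suc m) (1+\<delta>) - Tf m (1+\<delta>) \<ge> Pb \<delta> (Suc m) - Pb \<delta> m"
proof (induction m)
  case 0 then show ?case by (simp add: Pb_def)
next
  case (Suc m)
  have h1: "(real (Suc m))^2 \<ge> 1" using one_le_power[of "real (Suc m)" 2] by simp
  have "(real (Suc m))^2 * ((real (Suc m))^2 - 1) * \<delta>^2 / 6 \<ge> 0"
    using h1 by simp
  moreover have "(real (Suc m))^2 * \<delta> \<ge> 0" using assms by simp
  ultimately have pos: "Pb \<delta> (Suc m) \<ge> 0" unfolding Pb_def by linarith
  have e: "Tf (Suc (Suc m)) (1+\<delta>) - Tf (Suc m) (1+\<delta>) = (Tf (Suc m) (1+\<delta>) - Tf m (1+\<delta>)) + 2 * \<delta> * Tf (Suc m) (1+\<delta>)"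
    by (simp add: algebra_simps)
  have "2 * \<delta> * Tf (Suc m) (1+\<delta>) \<ge> 2 * \<delta> * Pb \<delta> (Suc m)"
    using Suc assms by (intro mult_left_mono) auto
  then have "Tf (Suc (Suc m)) (1+\<delta>) - Tf (Suc m) (1+\<delta>) \<ge> Pb \<delta> (Suc (Suc m)) - Pb \<delta> (Suc m)"
    using e Suc Pb_step[OF assms, of m] by linarith
  then show ?case using Suc by linarith
qed

lemma Tf_lower: assumes "\<delta> \<ge> 0" shows "Tf m (1+\<delta>) \<ge> Pb \<delta> m"
  using Tf_lower_aux[OF assms] by (cases m) (auto simp: Pb_def)


definition ind :: "nat set \<Rightarrow> nat \<Rightarrow> nat" where
  "ind S = (\<lambda>i. if i \<in> S then 1 else 0)"

definition mon :: "nat \<Rightarrow> (nat \<Rightarrow> nat) \<Rightarrow> (nat \<Rightarrow> real) \<Rightarrow> real" where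
  "mon n \<alpha> x = (\<Prod>i<n. x i ^ \<alpha> i)"

lemma meval_superset:
  assumes "finite F" "{\<alpha>. p \<alpha> \<noteq> 0} \<subseteq> F"
  shows "meval n p x = (\<Sum>\<alpha>\<in>F. p \<alpha> * mon n \<alpha> x)"
  unfolding meval_def mon_def
  by (rule sum.mono_neutral_left) (use assms in auto)

lemma inj_ind: "inj ind"
proof (rule injI)
  fix S T assume "ind S = ind T"
  then have "\<And>i. (i \<in> S) = (i \<in> T)" unfolding ind_def by (metis one_neq_zero)
  then show "S = T" by blast
qed

lemma subset_sum:
  assumes "finite K"
  shows "(\<Sum>S\<in>Pow K. f (card S)) = (\<Sum>j\<le>card K. real (card K choose j) * (f j :: real))"
proof -
  have "(\<Sum>S\<in>Pow K. f (card S)) = (\<Sum>j\<le>card K. \<Sum>S\<in>{S. S \<in> Pow K \<and> card S = j}. f (card S))"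
    by (rule sum.group[symmetric]) (use assms in \<open>auto intro: card_mono\<close>)
  also have "\<dots> = (\<Sum>j\<le>card K. real (card K choose j) * f j)"
  proof (rule sum.cong[OF refl])
    fix j
    have "(\<Sum>S\<in>{S. S \<in> Pow K \<and> card S = j}. f (card S)) = (\<Sum>S\<in>{S. S \<subseteq> K \<and> card S = j}. f j)"
      by (rule sum.cong) auto
    also have "\<dots> = real (card K choose j) * f j"
      using n_subsets[OF assms, of j] by simp
    finally show "(\<Sum>S\<in>{S. S \<in> Pow K \<and> card S = j}. f (card S)) = real (card K choose j) * f j" .
  qed
  finally show ?thesis .
qed

lemma sum_ind: "S \<subseteq> {..<n} \<Longrightarrow> (\<Sum>i<n. ind S i) = card S"
  unfolding ind_def by (simp add: Int_absorb1 sum.If_cases)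

lemma mon_ind:
  assumes "bool_pt n x" "S \<subseteq> {..<n}"
  shows "mon n (ind S) x = (if S \<subseteq> {i. i < n \<and> x i = 1} then 1 else 0)"
proof (cases "S \<subseteq> {i. i < n \<and> x i = 1}")
  case True
  then have "\<And>i. i < n \<Longrightarrow> x i ^ ind S i = 1" unfolding ind_def by auto
  then show ?thesis using True unfolding mon_def by simp
next
  case False
  then obtain i where i: "i \<in> S" "x i \<noteq> 1" using assms(2) by auto
  then have "i < n" using assms(2) by auto
  then have "x i = 0" using i assms(1) unfolding bool_pt_def by auto
  then have "x i ^ ind S i = 0" using i unfolding ind_def by simp
  then have "mon n (ind S) x = 0" unfolding mon_def using \<open>i < n\<close>
    by (metis finite_lessThan lessThan_iff prod_zero_iff)
  then show ?thesis using False by simp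
qed

lemma ml_eval:
  assumes "bool_pt n x"
  shows "(\<Sum>\<alpha>\<in>ind ` Pow {..<n}. g (\<Sum>i<n. \<alpha> i) * mon n \<alpha> x)
       = (\<Sum>j\<le>card {i. i < n \<and> x i = 1}. real (card {i. i < n \<and> x i = 1} choose j) * (g j :: real))"
proof -
  let ?K = "{i. i < n \<and> x i = 1}"
  have "(\<Sum>\<alpha>\<in>ind ` Pow {..<n}. g (\<Sum>i<n. \<alpha> i) * mon n \<alpha> x)
      = (\<Sum>S\<in>Pow {..<n}. g (\<Sum>i<n. ind S i) * mon n (ind S) x)"
    by (rule sum.reindex_cong[OF inj_on_subset[OF inj_ind subset_UNIV] refl]) simp
  also have "\<dots> = (\<Sum>S\<in>Pow {..<n}. if S \<subseteq> ?K then g (card S) else 0)"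
    by (rule sum.cong[OF refl]) (simp add: sum_ind mon_ind[OF assms])
  also have "\<dots> = (\<Sum>S\<in>{S \<in> Pow {..<n}. S \<subseteq> ?K}. g (card S))"
    using sum.inter_filter[of "Pow {..<n}" "\<lambda>S. g (card S)" "\<lambda>S. S \<subseteq> ?K"] by simp
  also have "{S \<in> Pow {..<n}. S \<subseteq> ?K} = Pow ?K" by auto
  also have "(\<Sum>S\<in>Pow ?K. g (card S)) = (\<Sum>j\<le>card ?K. real (card ?K choose j) * g j)"
    by (rule subset_sum) simp
  finally show ?thesis .
qed

theorem theorem9:
  fixes n :: nat and c :: real
  assumes "n \<ge> 3" and "c > 0"
    and "2 * c + (2/3) * c^2 - 2 * c / (3 * (real n - 2)) > 1"
  shows "let d = nat \<lceil>sqrt (c * (real n - 2))\<rceil> in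
         \<exists>p. mpoly_n n p \<and> mdeg n p = (if even d then d else d + 1) \<and> approx13 n p (NAE n)"
  unfolding Let_def
proof -
  define d where "d = nat \<lceil>sqrt (c * (real n - 2))\<rceil>"
  define D where "D = (if even d then d else d + 1)"
  have n2: "real n - 2 > 0" using assms(1) by simp
  have cpos: "c * (real n - 2) > 0" using assms(2) n2 by simp
  have sq0: "sqrt (c * (real n - 2)) > 0" using cpos by simp
  have "real d = of_int \<lceil>sqrt (c * (real n - 2))\<rceil>" unfolding d_def
    using sq0 by simp
  then have dge: "real d \<ge> sqrt (c * (real n - 2))" by (simp add: le_of_int_ceiling)
  have d1: "d \<ge> 1" using dge sq0 by (cases d) auto
  have DD: "D \<ge> d" "even D" unfolding D_def by auto
  have D2: "D \<ge> 2" using d1 DD unfolding D_def by (auto split: if_splits)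
  have Dsq: "(real D)^2 \<ge> c * (real n - 2)"
  proof -
    have "real D \<ge> sqrt (c * (real n - 2))" using dge DD by linarith
    then have "(real D)^2 \<ge> (sqrt (c * (real n - 2)))^2"
      by (rule power_mono) (use sq0 in linarith)+
    moreover have "(sqrt (c * (real n - 2)))^2 = c * (real n - 2)"
      using cpos by (intro real_sqrt_pow2) linarith
    ultimately show ?thesis by simp
  qed
  define \<delta> where "\<delta> = 2 / (real n - 2)"
  have \<delta>0: "\<delta> > 0" "\<delta> \<le> 2" using n2 assms(1) unfolding \<delta>_def by (auto simp: field_simps)
  define M where "M = Tf D (1 + \<delta>)"
  have M2: "M \<ge> 2"
  proof -
    define s where "s = (real D)^2 * \<delta>"
    have s2c: "s \<ge> 2 * c" unfolding s_def \<delta>_def using Dsq n2 by (simp add: field_simps)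
    have "M \<ge> Pb \<delta> D" unfolding M_def using Tf_lower \<delta>0 by simp
    also have "Pb \<delta> D = 1 + s + (s^2 - s * \<delta>) / 6"
      unfolding Pb_def s_def by (simp add: algebra_simps power2_eq_square)
    finally have M1: "M \<ge> 1 + s + (s^2 - s * \<delta>) / 6" .
    have key: "1 + s + (s^2 - s * \<delta>) / 6 - (1 + 2*c + (4*c^2 - 2*c*\<delta>)/6) = (s - 2*c) * (1 + (s + 2*c - \<delta>)/6)"
      by (simp add: field_simps power2_eq_square)
    have "(s - 2*c) * (1 + (s + 2*c - \<delta>)/6) \<ge> 0"
    proof (rule mult_nonneg_nonneg)
      show "0 \<le> s - 2 * c" using s2c by linarith
      have "0 \<le> 6 + (s + 2 * c - \<delta>)" using s2c \<delta>0 assms(2) by linarith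
      then show "0 \<le> 1 + (s + 2 * c - \<delta>) / 6" by (simp add: field_simps)
    qed
    moreover have "2 * c / (3 * (real n - 2)) = c * \<delta> / 3" unfolding \<delta>_def using n2 by (simp add: field_simps)
    ultimately show ?thesis using M1 key assms(3) by (simp add: field_simps power2_eq_square) 
  qed
  define a where "a = 1 / max 3 M"
  define g where "g j = a * cheb n D j" for j
  define A where "A = ind ` Pow {..<n}"
  define pml where "pml \<alpha> = (if \<alpha> \<in> A then g (\<Sum>i<n. \<alpha> i) else 0)" for \<alpha>
  define eD :: "nat \<Rightarrow> nat" where "eD = (\<lambda>i. if i = 0 then D else 0)"
  define e1 :: "nat \<Rightarrow> nat" where "e1 = (\<lambda>i. if i = 0 then 1 else 0)"
  define P where "P \<alpha> = pml \<alpha> + (if \<alpha> = eD then 1 else 0) - (if \<alpha> = e1 then 1 else 0)" for \<alpha>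
  define F where "F = A \<union> {eD, e1}"
  have finF: "finite F" unfolding F_def A_def by simp
  have suppF: "{\<alpha>. P \<alpha> \<noteq> 0} \<subseteq> F" unfolding F_def P_def pml_def by auto
  have eDA: "eD \<notin> A"
  proof
    assume "eD \<in> A"
    then obtain S where "eD = ind S" unfolding A_def by auto
    then have "eD 0 \<le> 1" unfolding ind_def by (metis le_numeral_extra(3) order_refl zero_le)
    then show False using D2 unfolding eD_def by simp
  qed
  have eDe1: "eD \<noteq> e1" using D2 unfolding eD_def e1_def by (metis One_nat_def Suc_1 not_less_eq_eq order_refl)
  have PeD: "P eD = 1" unfolding P_def pml_def using eDA eDe1 by simp
  have sig_eD: "(\<Sum>i<n. eD i) = D" unfolding eD_def using assms(1) by (simp add: sum.delta)
  have sig_e1: "(\<Sum>i<n. e1 i) = 1" unfolding e1_def using assms(1) by (simp add: sum.delta)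
  have mp: "mpoly_n n P"
    unfolding mpoly_n_def
  proof
    show "finite {\<alpha>. P \<alpha> \<noteq> 0}" using finF suppF finite_subset by blast
    show "\<forall>\<alpha>. P \<alpha> \<noteq> 0 \<longrightarrow> (\<forall>i\<ge>n. \<alpha> i = 0)"
    proof (intro allI impI)
      fix \<alpha> i assume "P \<alpha> \<noteq> 0" "i \<ge> n"
      then have "\<alpha> \<in> F" using suppF by auto
      then show "\<alpha> i = 0" using \<open>i \<ge> n\<close> assms(1) unfolding F_def A_def eD_def e1_def ind_def by auto
    qed
  qed
  have md: "mdeg n P = D"
    unfolding mdeg_def
  proof (rule Max_eqI)
    show "finite (insert 0 ((\<lambda>\<alpha>. \<Sum>i<n. \<alpha> i) ` {\<alpha>. P \<alpha> \<noteq> 0}))"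
      using finF suppF finite_subset by blast
    show "D \<in> insert 0 ((\<lambda>\<alpha>. \<Sum>i<n. \<alpha> i) ` {\<alpha>. P \<alpha> \<noteq> 0})"
      using PeD sig_eD by force
    fix y assume "y \<in> insert 0 ((\<lambda>\<alpha>. \<Sum>i<n. \<alpha> i) ` {\<alpha>. P \<alpha> \<noteq> 0})"
    then consider "y = 0" | \<alpha> where "P \<alpha> \<noteq> 0" "y = (\<Sum>i<n. \<alpha> i)" by auto
    then show "y \<le> D"
    proof cases
      case 1 then show ?thesis by simp
    next
      case 2
      show ?thesis
      proof (cases "\<alpha> = eD \<or> \<alpha> = e1")
        case True then show ?thesis using 2 sig_eD sig_e1 D2 by auto
      next
        case False
        then have "pml \<alpha> \<noteq> 0" using 2 unfolding P_def by simp
        then have "cheb n D y \<noteq> 0" using 2 unfolding pml_def g_def by (auto split: if_splits)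
        then show ?thesis using cheb_supp[of D y n] by (meson not_le)
      qed
    qed
  qed
  have ap: "approx13 n P (NAE n)"
    unfolding approx13_def
  proof (intro allI impI)
    fix x assume bx: "bool_pt n x"
    define K where "K = {i. i < n \<and> x i = 1}"
    define k where "k = card K"
    have x0: "x 0 = 0 \<or> x 0 = 1" using bx assms(1) unfolding bool_pt_def by auto
    have "meval n P x = (\<Sum>\<alpha>\<in>F. P \<alpha> * mon n \<alpha> x)" by (rule meval_superset[OF finF suppF])
    also have "\<dots> = (\<Sum>\<alpha>\<in>F. pml \<alpha> * mon n \<alpha> x) + (\<Sum>\<alpha>\<in>F. (if \<alpha> = eD then mon n \<alpha> x else 0))
        - (\<Sum>\<alpha>\<in>F. (if \<alpha> = e1 then mon n \<alpha> x else 0))"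
    proof -
      have "\<And>\<alpha>. P \<alpha> * mon n \<alpha> x = (pml \<alpha> * mon n \<alpha> x + (if \<alpha> = eD then mon n \<alpha> x else 0))
          - (if \<alpha> = e1 then mon n \<alpha> x else 0)"
        unfolding P_def by (simp add: algebra_simps)
      then show ?thesis by (simp add: sum.distrib sum_subtractf)
    qed
    also have "\<dots> = (\<Sum>\<alpha>\<in>F. pml \<alpha> * mon n \<alpha> x) + mon n eD x - mon n e1 x"
      using finF by (simp add: sum.delta F_def)
    also have "mon n eD x = x 0 ^ D" unfolding mon_def eD_def using assms(1)
      by (simp add: if_distrib[where f="\<lambda>e. x _ ^ e"] prod.delta cong: if_cong)
    also have "mon n e1 x = x 0" unfolding mon_def e1_def using assms(1)
      by (simp add: if_distrib[where f="\<lambda>e. x _ ^ e"] prod.delta cong: if_cong)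
    also have "x 0 ^ D = x 0" using x0 D2 by auto
    also have "(\<Sum>\<alpha>\<in>F. pml \<alpha> * mon n \<alpha> x) = (\<Sum>\<alpha>\<in>A. g (\<Sum>i<n. \<alpha> i) * mon n \<alpha> x)"
      unfolding F_def pml_def
      by (rule sum.mono_neutral_cong_right) (auto simp: A_def)
    also have "\<dots> = (\<Sum>j\<le>k. real (k choose j) * g j)"
      unfolding A_def k_def K_def by (rule ml_eval[OF bx])
    also have "\<dots> = a * ev (cheb n D) k"
      unfolding ev_def g_def by (simp add: sum_distrib_left algebra_simps)
    finally have mv: "meval n P x = a * Tf D ((2 * real k - real n) / (real n - 2))"
      by (simp add: ev_cheb)
    have kn: "k \<le> n" unfolding k_def K_def
      by (metis (no_types, lifting) card_lessThan card_mono finite_lessThan lessThan_iff mem_Collect_eq subsetI)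
    have a0: "a > 0" "a \<le> 1/3" unfolding a_def by (auto simp: field_simps)
    have aM: "\<bar>1 - a * M\<bar> \<le> 1/3" unfolding a_def using M2
      by (cases "M \<le> 3") (auto simp: max_def field_simps)
    have TM: "Tf D (1 + \<delta>) = M" "Tf D (- (1 + \<delta>)) = M"
      using Tf_neg[of D "1 + \<delta>"] DD unfolding M_def by auto
    consider "k = 0" | "k = n" | "0 < k \<and> k < n" using kn by linarith
    then show "\<bar>NAE n x - meval n P x\<bar> \<le> 1/3"
    proof cases
      case 1
      then have "K = {}" unfolding k_def K_def by simp
      then have "\<forall>i<n. x i = 0" using bx unfolding K_def bool_pt_def by auto
      then have N: "NAE n x = 1" unfolding NAE_def by simp
      have "(2 * real k - real n) / (real n - 2) = - (1 + \<delta>)" using 1 n2 unfolding \<delta>_def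
        by (simp add: field_simps)
      then show ?thesis using N mv TM aM by simp
    next
      case 2
      then have "K = {..<n}" unfolding k_def K_def
        by (metis (no_types, lifting) card_lessThan card_subset_eq finite_lessThan lessThan_iff mem_Collect_eq subsetI)
      then have "\<forall>i<n. x i = 1" unfolding K_def by auto
      then have N: "NAE n x = 1" unfolding NAE_def by simp
      have "(2 * real k - real n) / (real n - 2) = 1 + \<delta>" using 2 n2 unfolding \<delta>_def
        by (simp add: field_simps)
      then show ?thesis using N mv TM aM by simp
    next
      case 3
      then have "K \<noteq> {}" unfolding k_def by auto
      then obtain i where i: "i < n" "x i = 1" unfolding K_def by auto
      have "K \<noteq> {..<n}" using 3 unfolding k_def by auto
      then obtain j where j: "j < n" "x j \<noteq> 1" unfolding K_def by auto
      have N: "NAE n x = 0" unfolding NAE_def using i j by force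
      have "\<bar>(2 * real k - real n) / (real n - 2)\<bar> \<le> 1" using 3 n2
        by (auto simp: abs_le_iff field_simps)
      then have "\<bar>Tf D ((2 * real k - real n) / (real n - 2))\<bar> \<le> 1" by (rule Tf_bound)
      then have "\<bar>a * Tf D ((2 * real k - real n) / (real n - 2))\<bar> \<le> 1/3"
        using a0 by (simp add: abs_mult) (smt (verit) mult_left_le)
      then show ?thesis using N mv by simp
    qed
  qed
  show "\<exists>p. mpoly_n n p \<and> mdeg n p = (if even d then d else d + 1) \<and> approx13 n p (NAE n)"
    using mp md ap unfolding D_def d_def by blast
qed

end
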